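(* Consider a matched pair study and assume Fisher's null $H_0$ holds. If $\Gamma^\star_{(k)}\le\Gamma_0$ for some $1\le k\le I$ and $\Gamma_0\in[1,\infty]$, then $\overline p_{\Gamma_0;k}:=\overline G_{\Gamma_0;k}(T)$, where $\overline G_{\Gamma_0;k}(c)=\mathbb P(\overline T(\Gamma_0;k)\ge c)$, satisfies $\mathbb P(\overline p_{\Gamma_0;k}\le\alpha)\le\alpha$ for all $\alpha\in(0,1)$.
   Context: Setting: $I$ matched pairs ($n_i=2$), potential outcomes fixed, $Z\in\mathcal Z=\{z\in\{0,1\}^{2I}:z_{i1}+z_{i2}=1\ \forall i\}$ is the only randomness, with true mechanism $\mathbb P(Z=z)=\prod_i\prod_j(p^\star_{ij})^{z_{ij}}$, $p^\star_{i1}+p^\star_{i2}=1$; true hidden bias $\Gamma^\star_i=\max_jp^\star_{ij}/\min_kp^\star_{ik}\in[1,\infty]$; $\Gamma^\star_{(k)}$ is the $k$th smallest. Fisher's null $H_0$: $Y_{ij}(1)=Y_{ij}(0)$ for all $i,j$. $T=\sum_i\sum_jZ_{ij}q_{ij}$ with $q_{ij}$ fixed functions of $Y(0)$. $\mathcal I_k$ is a set of indices of $k$ pairs with the smallest values of $|q_{i1}-q_{i2}|$. $\overline T(\Gamma_0;k)$ is a sum of independent variables: for $i\in\mathcal I_k$ it equals $\max\{q_{i1},q_{i2}\}$ with probability $\Gamma_0/(1+\Gamma_0)$ (probability 1 if $\Gamma_0=\infty$) and $\min\{q_{i1},q_{i2}\}$ otherwise; for $i\notin\mathcal I_k$ it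 equals $\max\{q_{i1},q_{i2}\}$ with probability 1. *)

theory Defs
  imports "HOL-Analysis.Analysis" "HOL-Probability.Probability" "HOL-Library.Extended_Real"
begin

text \<open>Pairs are indexed by i in {..<I}; unit 1 and unit 2 of pair i.
  An assignment z :: nat => bool encodes z i = True iff unit 1 of pair i is treated
  (so Z_{i1} = 1, Z_{i2} = 0), z i = False iff unit 2 is treated.
  p1 i is the true probability p*_{i1}; p*_{i2} = 1 - p1 i.\<close>

definition assign_pmf :: "nat \<Rightarrow> (nat \<Rightarrow> real) \<Rightarrow> (nat \<Rightarrow> bool) pmf" where
  "assign_pmf I p1 = Pi_pmf {..<I} False (\<lambda>i. bernoulli_pmf (p1 i))"

definition test_stat :: "nat \<Rightarrow> (nat \<Rightarrow> real) \<Rightarrow> (nat \<Rightarrow> real) \<Rightarrow> (nat \<Rightarrow> bool) \<Rightarrow> real" where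
  "test_stat I q1 q2 z = (\<Sum>i<I. if z i then q1 i else q2 i)"

definition hidden_bias :: "real \<Rightarrow> ereal" where
  "hidden_bias p = (if min p (1 - p) = 0 then PInfty
                    else ereal (max p (1 - p) / min p (1 - p)))"

definition kth_smallest :: "nat \<Rightarrow> (nat \<Rightarrow> 'a::linorder) \<Rightarrow> nat \<Rightarrow> 'a" where
  "kth_smallest I f k = sort (map f [0..<I]) ! (k - 1)"

definition gamma_prob :: "ereal \<Rightarrow> real" where
  "gamma_prob G = (if G = PInfty then 1 else real_of_ereal G / (1 + real_of_ereal G))"

definition Tbar_pmf :: "nat \<Rightarrow> (nat \<Rightarrow> real) \<Rightarrow> (nat \<Rightarrow> real) \<Rightarrow> nat set \<Rightarrow> ereal \<Rightarrow> real pmf" where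
  "Tbar_pmf I q1 q2 Ik G =
     map_pmf (\<lambda>b. \<Sum>i<I. if b i then max (q1 i) (q2 i) else min (q1 i) (q2 i))
       (Pi_pmf {..<I} False (\<lambda>i. bernoulli_pmf (if i \<in> Ik then gamma_prob G else 1)))"

definition Gbar :: "nat \<Rightarrow> (nat \<Rightarrow> real) \<Rightarrow> (nat \<Rightarrow> real) \<Rightarrow> nat set \<Rightarrow> ereal \<Rightarrow> real \<Rightarrow> real" where
  "Gbar I q1 q2 Ik G c = measure_pmf.prob (Tbar_pmf I q1 q2 Ik G) {t. t \<ge> c}"

end

theory Submission
  imports Defs
begin


lemma Pi_pmf_reindex_invol:
  assumes fin: "finite A" and hA: "\<And>x. x \<in> A \<Longrightarrow> h x \<in> A" and hh: "\<And>x. h (h x) = x"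
    and hout: "\<And>x. x \<notin> A \<Longrightarrow> h x = x"
  shows "Pi_pmf A d (\<lambda>j. p (h j)) = map_pmf (\<lambda>g. g \<circ> h) (Pi_pmf A d p)"
proof (rule pmf_eqI)
  fix f :: "'a \<Rightarrow> 'b"
  have inj: "inj (\<lambda>g::'a\<Rightarrow>'b. g \<circ> h)"
  proof (rule injI)
    fix g1 g2 :: "'a \<Rightarrow> 'b" assume "g1 \<circ> h = g2 \<circ> h"
    then have "g1 \<circ> h \<circ> h = g2 \<circ> h \<circ> h" by simp
    then show "g1 = g2" by (simp add: fun_eq_iff hh)
  qed
  have ff: "f = (f \<circ> h) \<circ> h" by (auto simp: fun_eq_iff hh)
  have "pmf (map_pmf (\<lambda>g. g \<circ> h) (Pi_pmf A d p)) f
        = pmf (map_pmf (\<lambda>g. g \<circ> h) (Pi_pmf A d p)) ((f \<circ> h) \<circ> h)" using ff by simp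
  also have "\<dots> = pmf (Pi_pmf A d p) (f \<circ> h)" by (rule pmf_map_inj'[OF inj])
  finally have eq1: "pmf (map_pmf (\<lambda>g. g \<circ> h) (Pi_pmf A d p)) f = pmf (Pi_pmf A d p) (f \<circ> h)" .
  have cond: "(\<forall>x. x \<notin> A \<longrightarrow> (f \<circ> h) x = d) \<longleftrightarrow> (\<forall>x. x \<notin> A \<longrightarrow> f x = d)"
    using hout by auto
  have img: "h ` A = A"
  proof
    show "h ` A \<subseteq> A" using hA by auto
    show "A \<subseteq> h ` A"
    proof
      fix x assume "x \<in> A" then have "h x \<in> A" by (rule hA)
      then show "x \<in> h ` A" using hh[of x] by (metis image_eqI)
    qed
  qed
  have injh: "inj_on h A" by (metis hh inj_on_inverseI)
  have prod: "(\<Prod>x\<in>A. pmf (p x) ((f \<circ> h) x)) = (\<Prod>j\<in>A. pmf (p (h j)) (f j))"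
  proof -
    have "(\<Prod>x\<in>A. pmf (p x) ((f \<circ> h) x)) = (\<Prod>x\<in>h ` A. pmf (p x) (f (h x)))" using img by simp
    also have "\<dots> = (\<Prod>j\<in>A. pmf (p (h j)) (f (h (h j))))"
      by (subst prod.reindex[OF injh]) simp
    also have "\<dots> = (\<Prod>j\<in>A. pmf (p (h j)) (f j))" by (simp add: hh)
    finally show ?thesis .
  qed
  show "pmf (Pi_pmf A d (\<lambda>j. p (h j))) f = pmf (map_pmf (\<lambda>g. g \<circ> h) (Pi_pmf A d p)) f"
    unfolding eq1 using fin cond prod by (auto simp add: pmf_Pi)
qed

lemma pvalue_valid:
  fixes A :: "'a pmf" and T :: "'a \<Rightarrow> real"
  assumes fin: "finite (set_pmf A)" and a0: "0 \<le> \<alpha>"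
  shows "measure_pmf.prob A {z. measure_pmf.prob A {y. T z \<le> T y} \<le> \<alpha>} \<le> \<alpha>"
proof -
  let ?X = "{z. measure_pmf.prob A {y. T z \<le> T y} \<le> \<alpha>}"
  let ?S = "?X \<inter> set_pmf A"
  have eq: "measure_pmf.prob A ?X = measure_pmf.prob A ?S" by (simp add: measure_Int_set_pmf)
  show ?thesis
  proof (cases "?S = {}")
    case True
    then show ?thesis using eq a0 by simp
  next
    case False
    have finS: "finite ?S" using fin by simp
    obtain z0 where z0: "z0 \<in> ?S" "\<And>z. z \<in> ?S \<Longrightarrow> T z0 \<le> T z"
    proof -
      have "Min (T ` ?S) \<in> T ` ?S" using False finS by (intro Min_in) auto
      then obtain z0 where "z0 \<in> ?S" "T z0 = Min (T ` ?S)" by auto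
      moreover have "\<And>z. z \<in> ?S \<Longrightarrow> Min (T ` ?S) \<le> T z" using finS by (intro Min_le) auto
      ultimately show ?thesis using that by metis
    qed
    have "measure_pmf.prob A ?S \<le> measure_pmf.prob A {y. T z0 \<le> T y}"
      by (rule measure_pmf.finite_measure_mono) (use z0 in auto)
    also have "\<dots> \<le> \<alpha>" using z0(1) by simp
    finally show ?thesis using eq by simp
  qed
qed



lemma gamma_bounds:
  assumes "1 \<le> G" shows "0 \<le> gamma_prob G" "gamma_prob G \<le> 1"
proof -
  show "0 \<le> gamma_prob G" "gamma_prob G \<le> 1"
  proof (atomize(full), cases "G = PInfty")
    case False
    then obtain g where g: "G = ereal g" using assms by (cases G) auto
    then have "1 \<le> g" using assms by simp
    then show "0 \<le> gamma_prob G \<and> gamma_prob G \<le> 1" using g by (simp add: gamma_prob_def)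
  qed (simp add: gamma_prob_def)
qed

lemma bias_le:
  fixes p :: real
  assumes p: "0 \<le> p" "p \<le> 1" and G: "1 \<le> G" and hb: "hidden_bias p \<le> G"
  shows "max p (1 - p) \<le> gamma_prob G"
proof (cases "G = PInfty")
  case True then show ?thesis using p by (simp add: gamma_prob_def)
next
  case False
  then obtain g where g: "G = ereal g" using G by (cases G) auto
  have g1: "1 \<le> g" using G g by simp
  have mn: "min p (1 - p) \<noteq> 0" using hb g by (auto simp: hidden_bias_def split: if_splits)
  then have mpos: "min p (1 - p) > 0" using p by linarith
  have "max p (1 - p) / min p (1 - p) \<le> g" using hb g mn by (simp add: hidden_bias_def)
  then have "max p (1 - p) \<le> g * min p (1 - p)" using mpos by (simp add: divide_le_eq)
  moreover have "min p (1 - p) = 1 - max p (1 - p)" by linarith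
  ultimately have "max p (1 - p) * (1 + g) \<le> g" by (simp add: algebra_simps)
  then have "max p (1 - p) \<le> g / (1 + g)" using g1 by (simp add: le_divide_eq)
  then show ?thesis using g by (simp add: gamma_prob_def)
qed

lemma kth_card:
  fixes f :: "nat \<Rightarrow> 'a::linorder"
  assumes k: "1 \<le> k" "k \<le> I" and le: "kth_smallest I f k \<le> G"
  shows "k \<le> card {i. i < I \<and> f i \<le> G}"
proof -
  define xs where "xs = map f [0..<I]"
  define ys where "ys = sort xs"
  have len: "length ys = I" by (simp add: ys_def xs_def)
  have sorted: "sorted ys" by (simp add: ys_def)
  have all: "\<forall>y\<in>set (take k ys). y \<le> G"
  proof
    fix y assume "y \<in> set (take k ys)"
    then obtain n where n: "n < length (take k ys)" "y = take k ys ! n" by (metis in_set_conv_nth)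
    then have nk: "n < k" "n \<le> k - 1" by auto
    have "y = ys ! n" using n by simp
    also have "\<dots> \<le> ys ! (k - 1)" using sorted nk k len by (intro sorted_nth_mono) auto
    also have "\<dots> \<le> G" using le by (simp add: kth_smallest_def ys_def xs_def)
    finally show "y \<le> G" .
  qed
  have "k = length (filter (\<lambda>y. y \<le> G) (take k ys))"
    using all k len by (simp add: filter_True min_def)
  also have "\<dots> \<le> length (filter (\<lambda>y. y \<le> G) ys)"
  proof -
    have "filter (\<lambda>y. y \<le> G) ys = filter (\<lambda>y. y \<le> G) (take k ys) @ filter (\<lambda>y. y \<le> G) (drop k ys)"
      by (metis append_take_drop_id filter_append)
    then show ?thesis by simp
  qed
  also have "\<dots> = length (filter (\<lambda>y. y \<le> G) xs)"
    unfolding ys_def by (metis mset_filter mset_sort size_mset)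
  also have "\<dots> = card {i. i < I \<and> f i \<le> G}"
    unfolding xs_def length_filter_conv_card by (intro arg_cong[of _ _ card]) auto
  finally show ?thesis .
qed



lemma coord_bind:
  fixes p \<gamma> :: real
  assumes p: "0 \<le> p" "p \<le> 1" and pg: "(if c then p else 1 - p) \<le> \<gamma>" and g1: "\<gamma> \<le> 1"
  shows "bind_pmf (bernoulli_pmf p)
           (\<lambda>a. if (c \<longleftrightarrow> a) then return_pmf True
                else bernoulli_pmf ((\<gamma> - (if c then p else 1 - p)) / (1 - (if c then p else 1 - p))))
         = bernoulli_pmf \<gamma>"
proof -
  define \<pi> where "\<pi> = (if c then p else 1 - p)"
  define s where "s = (\<gamma> - \<pi>) / (1 - \<pi>)"
  have pi01: "0 \<le> \<pi>" "\<pi> \<le> 1" using p by (auto simp: \<pi>_def)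
  have pig: "\<pi> \<le> \<gamma>" using pg by (simp add: \<pi>_def)
  have s01: "0 \<le> s" "s \<le> 1"
  proof -
    show "0 \<le> s" using pi01 pig by (simp add: s_def)
    show "s \<le> 1"
    proof (cases "\<pi> = 1")
      case True then show ?thesis by (simp add: s_def)
    next
      case False then have "1 - \<pi> > 0" using pi01 by simp
      then show ?thesis using g1 by (simp add: s_def divide_le_eq)
    qed
  qed
  have g0: "0 \<le> \<gamma>" using pi01 pig by simp
  have key: "\<pi> + (1 - \<pi>) * s = \<gamma>"
  proof (cases "\<pi> = 1")
    case True then show ?thesis using pig g1 by simp
  next
    case False then have "1 - \<pi> \<noteq> 0" by simp
    then show ?thesis by (simp add: s_def)
  qed
  have T: "pmf (bind_pmf (bernoulli_pmf p) (\<lambda>a. if (c \<longleftrightarrow> a) then return_pmf True else bernoulli_pmf s)) True = \<gamma>"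
    unfolding pmf_bind using p s01 key by (cases c) (auto simp: \<pi>_def algebra_simps)
  have F: "pmf (bind_pmf (bernoulli_pmf p) (\<lambda>a. if (c \<longleftrightarrow> a) then return_pmf True else bernoulli_pmf s)) False = 1 - \<gamma>"
    unfolding pmf_bind using p s01 key by (cases c) (auto simp: \<pi>_def algebra_simps)
  have "bind_pmf (bernoulli_pmf p) (\<lambda>a. if (c \<longleftrightarrow> a) then return_pmf True else bernoulli_pmf s) = bernoulli_pmf \<gamma>"
  proof (rule pmf_eqI)
    fix x :: bool show "pmf (bind_pmf (bernoulli_pmf p) (\<lambda>a. if (c \<longleftrightarrow> a) then return_pmf True else bernoulli_pmf s)) x = pmf (bernoulli_pmf \<gamma>) x"
      using T F g0 g1 by (cases x) auto
  qed
  then show ?thesis unfolding s_def \<pi>_def .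
qed



lemma swap_perm:
  assumes fJ: "finite J" and fK: "finite K" and cd: "card J = card K"
  obtains h where "\<And>x. h (h x) = x" "\<And>x. x \<notin> J \<union> K \<Longrightarrow> h x = x"
    "\<And>x. x \<in> J \<inter> K \<Longrightarrow> h x = x" "\<And>x. x \<in> J - K \<Longrightarrow> h x \<in> K - J"
    "\<And>x. x \<in> K - J \<Longrightarrow> h x \<in> J - K"
proof -
  have "card (J - K) = card (K - J)"
    using fJ fK cd by (simp add: card_Diff_subset_Int Int_commute)
  then obtain g where g: "bij_betw g (J - K) (K - J)"
    using finite_same_card_bij[of "J - K" "K - J"] fJ fK by auto
  define h where "h x = (if x \<in> J - K then g x else if x \<in> K - J then inv_into (J - K) g x else x)" for x
  have g1: "x \<in> J - K \<Longrightarrow> g x \<in> K - J" for x using g by (auto simp: bij_betw_def)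
  have g2: "x \<in> K - J \<Longrightarrow> inv_into (J - K) g x \<in> J - K" for x
    using bij_betwE[OF bij_betw_inv_into[OF g]] by blast
  have g3: "x \<in> J - K \<Longrightarrow> inv_into (J - K) g (g x) = x" for x
    using g by (simp add: bij_betw_def)
  have g4: "x \<in> K - J \<Longrightarrow> g (inv_into (J - K) g x) = x" for x
    using g unfolding bij_betw_def by (simp add: f_inv_into_f)
  show ?thesis
  proof (rule that)
    fix x show "h (h x) = x"
    proof (cases "x \<in> J - K")
      case True then show ?thesis using g1[OF True] g3[OF True] by (simp add: h_def)
    next
      case F: False show ?thesis
      proof (cases "x \<in> K - J")
        case True then show ?thesis using g2[OF True] g4[OF True] F by (simp add: h_def)
      next
        case False then have "h x = x" using F unfolding h_def by auto
        then show ?thesis by simp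
      qed
    qed
  next
    fix x assume "x \<notin> J \<union> K" then show "h x = x" by (simp add: h_def)
  next
    fix x assume "x \<in> J \<inter> K" then show "h x = x" by (simp add: h_def)
  next
    fix x assume a: "x \<in> J - K" then show "h x \<in> K - J" using g1[OF a] by (simp add: h_def)
  next
    fix x assume a: "x \<in> K - J" then show "h x \<in> J - K" using g2[OF a] by (simp add: h_def)
  qed
qed


lemma bernoulli_one: "bernoulli_pmf 1 = return_pmf True"
  by (rule pmf_eqI) (auto simp: indicator_def)

theorem corollary2:
  fixes I k :: nat and p1 q1 q2 :: "nat \<Rightarrow> real" and Ik :: "nat set"
    and \<Gamma>0 :: ereal and \<alpha> :: real
  assumes prob: "\<And>i. i < I \<Longrightarrow> 0 \<le> p1 i \<and> p1 i \<le> 1"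
    and k: "1 \<le> k" "k \<le> I"
    and Ik_sub: "Ik \<subseteq> {..<I}" and Ik_card: "card Ik = k"
    and Ik_smallest: "\<And>i j. i \<in> Ik \<Longrightarrow> j \<in> {..<I} - Ik \<Longrightarrow>
                          \<bar>q1 i - q2 i\<bar> \<le> \<bar>q1 j - q2 j\<bar>"
    and G0: "1 \<le> \<Gamma>0"
    and bias: "kth_smallest I (\<lambda>i. hidden_bias (p1 i)) k \<le> \<Gamma>0"
    and alpha: "0 < \<alpha>" "\<alpha> < 1"
  shows "measure_pmf.prob (assign_pmf I p1)
           {z. Gbar I q1 q2 Ik \<Gamma>0 (test_stat I q1 q2 z) \<le> \<alpha>} \<le> \<alpha>"
proof -
  define \<gamma> where "\<gamma> = gamma_prob \<Gamma>0"
  have g01: "0 \<le> \<gamma>" "\<gamma> \<le> 1" using gamma_bounds[OF G0] by (auto simp: \<gamma>_def)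
  define c where "c j = (q2 j \<le> q1 j)" for j
  define pv where "pv j = (if c j then p1 j else 1 - p1 j)" for j
  define s where "s j = (\<gamma> - pv j) / (1 - pv j)" for j
  define H where "H = {i. i < I \<and> hidden_bias (p1 i) \<le> \<Gamma>0}"
  have "k \<le> card H" unfolding H_def by (rule kth_card[OF k bias])
  then obtain J where J: "J \<subseteq> H" "card J = k" "finite J" by (rule obtain_subset_with_card_n)
  have JI: "J \<subseteq> {..<I}" using J(1) by (auto simp: H_def)
  have Jpv: "pv j \<le> \<gamma>" if "j \<in> J" for j
  proof -
    have "j < I" "hidden_bias (p1 j) \<le> \<Gamma>0" using that J(1) by (auto simp: H_def)
    then have "max (p1 j) (1 - p1 j) \<le> \<gamma>" unfolding \<gamma>_def using prob G0 by (intro bias_le) auto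
    then show ?thesis by (auto simp: pv_def)
  qed
  have fIk: "finite Ik" using Ik_sub finite_subset by blast
  obtain h where h: "\<And>x. h (h x) = x" "\<And>x. x \<notin> J \<union> Ik \<Longrightarrow> h x = x"
    "\<And>x. x \<in> J \<inter> Ik \<Longrightarrow> h x = x" "\<And>x. x \<in> J - Ik \<Longrightarrow> h x \<in> Ik - J"
    "\<And>x. x \<in> Ik - J \<Longrightarrow> h x \<in> J - Ik"
  proof -
    have cd: "card J = card Ik" using J(2) Ik_card by simp
    show ?thesis by (rule swap_perm[OF J(3) fIk cd]) (rule that; assumption)+
  qed
  have hcases: "(x \<in> J \<inter> Ik \<and> h x = x) \<or> (x \<in> J - Ik \<and> h x \<in> Ik - J) \<or>
      (x \<in> Ik - J \<and> h x \<in> J - Ik) \<or> (x \<notin> J \<union> Ik \<and> h x = x)" for x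
  proof (cases "x \<in> J \<inter> Ik")
    case True then show ?thesis using h(3)[OF True] by simp
  next
    case F1: False show ?thesis
    proof (cases "x \<in> J - Ik")
      case True then show ?thesis using h(4)[OF True] by simp
    next
      case F2: False show ?thesis
      proof (cases "x \<in> Ik - J")
        case True then show ?thesis using h(5)[OF True] by simp
      next
        case False then have "x \<notin> J \<union> Ik" using F1 F2 by blast
        then show ?thesis using h(2)[of x] by simp
      qed
    qed
  qed
  have hI: "h x \<in> {..<I}" if "x \<in> {..<I}" for x
    using hcases[of x] that JI Ik_sub by auto
  have hout: "h x = x" if "x \<notin> {..<I}" for x
  proof -
    have "x \<notin> J \<union> Ik" using JI Ik_sub that by auto
    then show ?thesis using h(2) by simp
  qed
  have hJ: "h j \<in> Ik \<longleftrightarrow> j \<in> J" for j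
    using hcases[of j] by auto
  have hd: "\<bar>q1 (h j) - q2 (h j)\<bar> \<le> \<bar>q1 j - q2 j\<bar>" if "j \<in> J" for j
  proof (cases "j \<in> Ik")
    case True then show ?thesis using h(3) that by simp
  next
    case False
    then have "h j \<in> Ik" using h(4) that by blast
    moreover have "j \<in> {..<I} - Ik" using False that JI by blast
    ultimately show ?thesis by (rule Ik_smallest)
  qed
  define Q where "Q j a = (if j \<in> J then (if (c j \<longleftrightarrow> a) then return_pmf True else bernoulli_pmf (s j))
                          else return_pmf True)" for j a
  define r where "r i = (if i \<in> Ik then \<gamma> else 1)" for i
  define A where "A = assign_pmf I p1"
  define B where "B z = Pi_pmf {..<I} False (\<lambda>j. Q j (z j))" for z
  define BW where "BW = bind_pmf A B"
  define P0 where "P0 = Pi_pmf {..<I} False (\<lambda>i. bernoulli_pmf (r i))"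
  define Sf where "Sf b = (\<Sum>i<I. if b i then max (q1 i) (q2 i) else min (q1 i) (q2 i))" for b
  define T where "T z = test_stat I q1 q2 z" for z
  have BW1: "BW = Pi_pmf {..<I} False (\<lambda>j. bind_pmf (bernoulli_pmf (p1 j)) (Q j))"
    unfolding BW_def A_def B_def assign_pmf_def by (subst Pi_pmf_bind[where d'=False]) auto
  also have "\<dots> = Pi_pmf {..<I} False (\<lambda>j. bernoulli_pmf (r (h j)))"
  proof (rule Pi_pmf_cong)
    fix j assume j: "j \<in> {..<I}"
    show "bind_pmf (bernoulli_pmf (p1 j)) (Q j) = bernoulli_pmf (r (h j))"
    proof (cases "j \<in> J")
      case True
      have "bind_pmf (bernoulli_pmf (p1 j)) (Q j) = bernoulli_pmf \<gamma>"
        using True coord_bind[of "p1 j" "c j" \<gamma>] prob[of j] j Jpv[OF True] g01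
        unfolding Q_def s_def pv_def by simp
      then show ?thesis using True hJ by (simp add: r_def)
    next
      case False
      then have "Q j = (\<lambda>a. return_pmf True)" by (simp add: Q_def fun_eq_iff)
      then show ?thesis using hJ False by (simp add: r_def bernoulli_one bind_pmf_const)
    qed
  qed auto
  also have "\<dots> = map_pmf (\<lambda>g. g \<circ> h) P0"
    unfolding P0_def by (rule Pi_pmf_reindex_invol) (use hI hout h(1) in auto)
  finally have BW2: "BW = map_pmf (\<lambda>g. g \<circ> h) P0" .
  have Gbar_eq: "Gbar I q1 q2 Ik \<Gamma>0 x = measure_pmf.prob BW {b. x \<le> Sf (b \<circ> h)}" for x
  proof -
    have "Tbar_pmf I q1 q2 Ik \<Gamma>0 = map_pmf Sf P0"
      unfolding Tbar_pmf_def Sf_def P0_def r_def \<gamma>_def ..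
    also have "\<dots> = map_pmf (\<lambda>b. Sf (b \<circ> h)) BW"
      unfolding BW2 map_pmf_comp by (simp add: comp_def h(1))
    finally show ?thesis unfolding Gbar_def by simp
  qed
  have pw: "T z \<le> Sf (b \<circ> h)" if b: "b \<in> set_pmf (B z)" for z b
  proof -
    have bprop: "b j \<in> set_pmf (Q j (z j))" if "j < I" for j
      using b that unfolding B_def by (subst (asm) set_Pi_pmf) (auto simp: PiE_dflt_def)
    define M where "M i = max (q1 i) (q2 i)" for i
    define mm where "mm i = min (q1 i) (q2 i)" for i
    define X where "X j = (if z j then q1 j else q2 j)" for j
    define Y where "Y i = (if b (h i) then M i else mm i)" for i
    have per: "X j - M j \<le> Y (h j) - M (h j)" if j: "j < I" for j
    proof (cases "b j")
      case True
      then have "Y (h j) = M (h j)" by (simp add: Y_def h(1))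
      moreover have "X j \<le> M j" by (simp add: X_def M_def)
      ultimately show ?thesis by simp
    next
      case False
      have jJ: "j \<in> J"
      proof (rule ccontr)
        assume "j \<notin> J" then show False using bprop[OF j] False by (simp add: Q_def)
      qed
      have ncz: "\<not> (c j \<longleftrightarrow> z j)"
      proof
        assume "c j \<longleftrightarrow> z j" then show False using bprop[OF j] False jJ by (simp add: Q_def)
      qed
      have "X j = mm j" using ncz by (auto simp: X_def mm_def c_def)
      moreover have "Y (h j) = mm (h j)" using False by (simp add: Y_def h(1))
      moreover have "M j - mm j = \<bar>q1 j - q2 j\<bar>" "M (h j) - mm (h j) = \<bar>q1 (h j) - q2 (h j)\<bar>"
        by (auto simp: M_def mm_def)
      ultimately show ?thesis using hd[OF jJ] by simp
    qed
    have injh: "inj_on h {..<I}" by (metis h(1) inj_on_inverseI)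
    have imgh: "h ` {..<I} = {..<I}"
    proof
      show "h ` {..<I} \<subseteq> {..<I}" using hI by auto
      show "{..<I} \<subseteq> h ` {..<I}"
      proof
        fix x assume "x \<in> {..<I}" then have "h x \<in> {..<I}" by (rule hI)
        then show "x \<in> h ` {..<I}" using h(1)[of x] by (metis image_eqI)
      qed
    qed
    have reidx: "(\<Sum>j<I. F (h j)) = (\<Sum>i<I. F i)" for F :: "nat \<Rightarrow> real"
    proof -
      have "(\<Sum>i<I. F i) = (\<Sum>i\<in>h ` {..<I}. F i)" using imgh by simp
      also have "\<dots> = (\<Sum>j<I. F (h j))" by (subst sum.reindex[OF injh]) simp
      finally show ?thesis by simp
    qed
    have "(\<Sum>j<I. X j - M j) \<le> (\<Sum>j<I. Y (h j) - M (h j))"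
      by (rule sum_mono) (use per in auto)
    then have "(\<Sum>j<I. X j) - (\<Sum>j<I. M j) \<le> (\<Sum>j<I. Y (h j)) - (\<Sum>j<I. M (h j))"
      by (simp add: sum_subtractf)
    then have "(\<Sum>j<I. X j) \<le> (\<Sum>i<I. Y i)" using reidx[of Y] reidx[of M] by simp
    moreover have "T z = (\<Sum>j<I. X j)" by (simp add: T_def test_stat_def X_def)
    moreover have "Sf (b \<circ> h) = (\<Sum>i<I. Y i)" unfolding Sf_def Y_def M_def mm_def comp_def by (rule refl)
    ultimately show ?thesis by simp
  qed
  define W where "W = bind_pmf A (\<lambda>z. map_pmf (Pair z) (B z))"
  have Wfst: "map_pmf fst W = A"
    unfolding W_def map_bind_pmf by (simp add: map_pmf_comp comp_def bind_return_pmf')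
  have Wsnd: "map_pmf snd W = BW"
    unfolding W_def map_bind_pmf BW_def by (simp add: map_pmf_comp comp_def)
  have dom: "measure_pmf.prob A {z. x \<le> T z} \<le> measure_pmf.prob BW {b. x \<le> Sf (b \<circ> h)}" for x
  proof -
    have "measure_pmf.prob A {z. x \<le> T z} = measure_pmf.prob W {w. x \<le> T (fst w)}"
      by (subst Wfst[symmetric]) (simp add: vimage_def)
    also have "\<dots> \<le> measure_pmf.prob W {w. x \<le> Sf (snd w \<circ> h)}"
    proof (rule measure_pmf.finite_measure_mono_AE)
      show "AE w in measure_pmf W. w \<in> {w. x \<le> T (fst w)} \<longrightarrow> w \<in> {w. x \<le> Sf (snd w \<circ> h)}"
        unfolding AE_measure_pmf_iff
      proof (intro ballI impI)
        fix w assume w: "w \<in> set_pmf W" and "w \<in> {w. x \<le> T (fst w)}"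
        then have x: "x \<le> T (fst w)" by simp
        from w have "snd w \<in> set_pmf (B (fst w))" by (auto simp: W_def)
        then have "T (fst w) \<le> Sf (snd w \<circ> h)" by (rule pw)
        then show "w \<in> {w. x \<le> Sf (snd w \<circ> h)}" using x by simp
      qed
    qed simp
    also have "\<dots> = measure_pmf.prob BW {b. x \<le> Sf (b \<circ> h)}"
      by (subst Wsnd[symmetric]) (simp add: vimage_def)
    finally show ?thesis .
  qed
  have finA: "finite (set_pmf A)"
    unfolding A_def assign_pmf_def by (subst set_Pi_pmf) auto
  have sub: "{z. Gbar I q1 q2 Ik \<Gamma>0 (test_stat I q1 q2 z) \<le> \<alpha>}
             \<subseteq> {z. measure_pmf.prob A {y. T z \<le> T y} \<le> \<alpha>}"
  proof
    fix z assume "z \<in> {z. Gbar I q1 q2 Ik \<Gamma>0 (test_stat I q1 q2 z) \<le> \<alpha>}"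
    then have "measure_pmf.prob BW {b. T z \<le> Sf (b \<circ> h)} \<le> \<alpha>"
      using Gbar_eq by (simp add: T_def)
    then show "z \<in> {z. measure_pmf.prob A {y. T z \<le> T y} \<le> \<alpha>}"
      using dom[of "T z"] by simp
  qed
  have "measure_pmf.prob A {z. Gbar I q1 q2 Ik \<Gamma>0 (test_stat I q1 q2 z) \<le> \<alpha>}
        \<le> measure_pmf.prob A {z. measure_pmf.prob A {y. T z \<le> T y} \<le> \<alpha>}"
    by (rule measure_pmf.finite_measure_mono[OF sub]) simp
  also have "\<dots> \<le> \<alpha>" by (rule pvalue_valid[OF finA]) (use alpha in simp)
  finally show ?thesis by (simp add: A_def)
qed

end
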